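(* Let $m\ge2$ and let $X=(X_i)_{1\le i\le n}$, $Y=(Y_i)_{1\le i\le n}$ be independent with i.i.d. letters in $\{\alpha_1,\dots,\alpha_m\}$, $\mathbb{P}(X_1=\alpha_k)=\mathbb{P}(Y_1=\alpha_k)=p_k$, where $p_2=\max_{2\le j\le m}p_j$. Let $LC_n$ be the length of the longest common subsequence of $X$ and $Y$. Let $p_1>1/2$ and let \[ D_1:=\left\{LC_n\ge np_1+\left((1-p_2)^3-p_2\right)np_2^2\right\}. \] Then \[ \mathbb{P}(D_1)\ge1-4\exp(-2np_2^6)-\exp\left(n\left(p_2^3+\log(1-p_2^3)\right)(p_1-p_2^3)\right). \]
   Context: The length of the longest common subsequence of $X_1\cdots X_n$ and $Y_1\cdots Y_n$ is the largest $k$ such that there exist $1\le i_1<\dots<i_k\le n$, $1\le j_1<\dots<j_k\le n$ with $X_{i_s}=Y_{j_s}$ for all $s$. *)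

theory Defs
  imports "HOL-Analysis.Analysis"
begin

text \<open>Letters: the alphabet {alpha_1,...,alpha_m} is represented by the indices {1..m}.
  A word of length n is a list of length n over {1..m}.\<close>

definition words :: "nat \<Rightarrow> nat \<Rightarrow> nat list set" where
  "words m n = {xs. length xs = n \<and> set xs \<subseteq> {1..m}}"

definition common_subseq_len :: "'a list \<Rightarrow> 'a list \<Rightarrow> nat \<Rightarrow> bool" where
  "common_subseq_len xs ys k \<longleftrightarrow>
     (\<exists>I J :: nat \<Rightarrow> nat. strict_mono_on {..<k} I \<and> strict_mono_on {..<k} J \<and>
        (\<forall>s<k. I s < length xs \<and> J s < length ys \<and> xs ! (I s) = ys ! (J s)))"

definition LCS_len :: "'a list \<Rightarrow> 'a list \<Rightarrow> nat" where
  "LCS_len xs ys = Max {k. common_subseq_len xs ys k}"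

definition word_prob :: "(nat \<Rightarrow> real) \<Rightarrow> nat list \<Rightarrow> real" where
  "word_prob p xs = (\<Prod>i<length xs. p (xs ! i))"

definition pair_prob :: "nat \<Rightarrow> (nat \<Rightarrow> real) \<Rightarrow> nat \<Rightarrow> (nat list \<Rightarrow> nat list \<Rightarrow> bool) \<Rightarrow> real" where
  "pair_prob m p n E =
     (\<Sum>(xs, ys) \<in> {(xs, ys). xs \<in> words m n \<and> ys \<in> words m n \<and> E xs ys}.
        word_prob p xs * word_prob p ys)"

end

theory Submission
  imports Defs "HOL-Library.Sublist" "HOL-Probability.Hoeffding"
begin

definition gap :: "nat list \<Rightarrow> nat list" where "gap xs = takeWhile (\<lambda>x. x \<noteq> 1) xs"
definition rest :: "nat list \<Rightarrow> nat list" where "rest xs = tl (dropWhile (\<lambda>x. x \<noteq> 1) xs)"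
definition cnt1 :: "nat list \<Rightarrow> nat" where "cnt1 xs = length (filter (\<lambda>x. x = 1) xs)"

lemma gap_simps[simp]: "gap [] = []" "gap (x#xs) = (if x = 1 then [] else x # gap xs)"
  by (auto simp: gap_def)
lemma rest_simps[simp]: "rest [] = []" "rest (x#xs) = (if x = 1 then xs else rest xs)"
  by (auto simp: rest_def)
lemma cnt1_simps[simp]: "cnt1 [] = 0" "cnt1 (x#xs) = (if x = 1 then Suc (cnt1 xs) else cnt1 xs)"
  by (auto simp: cnt1_def)

lemma decomp: "1 \<in> set xs \<Longrightarrow> xs = gap xs @ 1 # rest xs"
  by (induction xs) auto
lemma cnt1_rest: "1 \<in> set xs \<Longrightarrow> cnt1 xs = Suc (cnt1 (rest xs))"
  by (induction xs) auto
lemma cnt1_pos: "cnt1 xs > 0 \<longleftrightarrow> 1 \<in> set xs"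
  by (induction xs) auto

fun Gs :: "nat \<Rightarrow> nat list \<Rightarrow> nat list \<Rightarrow> nat" where
  "Gs 0 xs ys = 0"
| "Gs (Suc J) xs ys = (if 2 \<in> set (gap xs) \<and> 2 \<in> set (gap ys) then 1 else 0) + Gs J (rest xs) (rest ys)"

fun Zs :: "nat \<Rightarrow> nat list \<Rightarrow> nat list \<Rightarrow> nat list" where
  "Zs 0 xs ys = []"
| "Zs (Suc J) xs ys = (if 2 \<in> set (gap xs) \<and> 2 \<in> set (gap ys) then [2,1] else [1]) @ Zs J (rest xs) (rest ys)"

lemma Zs_len: "length (Zs J xs ys) = J + Gs J xs ys"
  by (induction J arbitrary: xs ys) auto

lemma Zs_sym: "Zs J xs ys = Zs J ys xs"
  by (induction J arbitrary: xs ys) auto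

lemma Zs_subseq: "J \<le> cnt1 xs \<Longrightarrow> subseq (Zs J xs ys) xs"
proof (induction J arbitrary: xs ys)
  case 0 then show ?case by simp
next
  case (Suc J)
  then have one: "1 \<in> set xs" using cnt1_pos by fastforce
  have IH: "subseq (Zs J (rest xs) (rest ys)) (rest xs)"
    using Suc cnt1_rest[OF one] by simp
  have e: "xs = gap xs @ 1 # rest xs" using decomp[OF one] .
  show ?case
  proof (cases "2 \<in> set (gap xs) \<and> 2 \<in> set (gap ys)")
    case True
    have 1: "subseq ([2] @ 1 # Zs J (rest xs) (rest ys)) (gap xs @ 1 # rest xs)"
      using True IH by (intro list_emb_append_mono) (auto simp: subseq_singleton_left)
    have "Zs (Suc J) xs ys = [2] @ 1 # Zs J (rest xs) (rest ys)" using True by simp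
    then show ?thesis using 1 e by metis
  next
    case False
    have 1: "subseq (1 # Zs J (rest xs) (rest ys)) (gap xs @ 1 # rest xs)"
      using IH by (intro list_emb_append2) auto
    have "Zs (Suc J) xs ys = 1 # Zs J (rest xs) (rest ys)" using False by simp
    then show ?thesis using 1 e by metis
  qed
qed

lemma subseq_index:
  assumes "subseq zs xs"
  shows "\<exists>I. strict_mono_on {..<length zs} I \<and> (\<forall>s<length zs. I s < length xs \<and> xs ! I s = zs ! s)"
  using assms
proof (induction rule: list_emb.induct)
  case (list_emb_Nil ys)
  then show ?case by (auto simp: strict_mono_on_def)
next
  case (list_emb_Cons xs ys y)
  then obtain I where I: "strict_mono_on {..<length xs} I" "\<forall>s<length xs. I s < length ys \<and> ys ! I s = xs ! s" by blast
  show ?case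
    by (rule exI[of _ "\<lambda>s. Suc (I s)"]) (use I in \<open>auto simp: strict_mono_on_def\<close>)
next
  case (list_emb_Cons2 x y xs ys)
  then obtain I where I: "strict_mono_on {..<length xs} I" "\<forall>s<length xs. I s < length ys \<and> ys ! I s = xs ! s" by blast
  show ?case
  proof (rule exI[of _ "\<lambda>s. if s = 0 then 0 else Suc (I (s - 1))"], rule conjI)
    show "strict_mono_on {..<length (x # xs)} (\<lambda>s. if s = 0 then 0 else Suc (I (s - 1)))"
      unfolding strict_mono_on_def
    proof (intro allI impI, elim conjE)
      fix s t assume st: "s \<in> {..<length (x # xs)}" "t \<in> {..<length (x # xs)}" "s < t"
      show "(if s = 0 then 0 else Suc (I (s - 1))) < (if t = 0 then 0 else Suc (I (t - 1)))"
      proof (cases "s = 0")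
        case False
        have "s - 1 < length xs" "t - 1 < length xs" "s - 1 < t - 1" using False st by auto
        then have "I (s - 1) < I (t - 1)" using I(1) unfolding strict_mono_on_def by blast
        then show ?thesis using False st by auto
      qed (use st in auto)
    qed
  next
    show "\<forall>s<length (x # xs). (if s = 0 then 0 else Suc (I (s - 1))) < length (y # ys) \<and>
         (y # ys) ! (if s = 0 then 0 else Suc (I (s - 1))) = (x # xs) ! s"
    proof (intro allI impI)
    fix s assume "s < length (x # xs)"
    then show "(if s = 0 then 0 else Suc (I (s - 1))) < length (y # ys) \<and>
         (y # ys) ! (if s = 0 then 0 else Suc (I (s - 1))) = (x # xs) ! s"
    proof (cases s)
      case (Suc s')
      then have "s' < length xs" using \<open>s < length (x # xs)\<close> by simp
      then show ?thesis using I(2) Suc by simp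
    qed (use list_emb_Cons2.hyps(1) in simp)
    qed
  qed
qed

lemma common_le: "common_subseq_len xs ys k \<Longrightarrow> k \<le> length xs"
proof -
  assume "common_subseq_len xs ys k"
  then obtain I where I: "strict_mono_on {..<k} I" "\<forall>s<k. I s < length xs"
    unfolding common_subseq_len_def by blast
  have "inj_on I {..<k}" using I(1) strict_mono_on_imp_inj_on by blast
  then have "card (I ` {..<k}) = k" by (simp add: card_image)
  moreover have "I ` {..<k} \<subseteq> {..<length xs}" using I(2) by auto
  ultimately show "k \<le> length xs" by (metis card_lessThan card_mono finite_lessThan)
qed

lemma LCS_ge:
  assumes "subseq zs xs" "subseq zs ys"
  shows "length zs \<le> LCS_len xs ys"
proof -
  obtain I where I: "strict_mono_on {..<length zs} I" "\<forall>s<length zs. I s < length xs \<and> xs ! I s = zs ! s"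
    using subseq_index[OF assms(1)] by blast
  obtain J where J: "strict_mono_on {..<length zs} J" "\<forall>s<length zs. J s < length ys \<and> ys ! J s = zs ! s"
    using subseq_index[OF assms(2)] by blast
  have "common_subseq_len xs ys (length zs)"
  proof -
    have "\<forall>s<length zs. I s < length xs \<and> J s < length ys \<and> xs ! I s = ys ! J s"
    proof (intro allI impI)
      fix s assume s: "s < length zs"
      have "I s < length xs \<and> xs ! I s = zs ! s" using I(2) s by blast
      moreover have "J s < length ys \<and> ys ! J s = zs ! s" using J(2) s by blast
      ultimately show "I s < length xs \<and> J s < length ys \<and> xs ! I s = ys ! J s" by simp
    qed
    then show ?thesis unfolding common_subseq_len_def using I(1) J(1) by (intro exI[of _ I] exI[of _ J]) simp
  qed
  moreover have "finite {k. common_subseq_len xs ys k}"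
  proof (rule finite_subset[of _ "{..length xs}"])
    show "{k. common_subseq_len xs ys k} \<subseteq> {..length xs}" using common_le by blast
  qed simp
  ultimately show ?thesis unfolding LCS_len_def by (intro Max_ge) simp_all
qed

lemma LCS_Gs:
  assumes "J \<le> cnt1 xs" "J \<le> cnt1 ys"
  shows "J + Gs J xs ys \<le> LCS_len xs ys"
proof -
  have "subseq (Zs J ys xs) ys" by (rule Zs_subseq[OF assms(2)])
  then have "subseq (Zs J xs ys) ys" by (subst Zs_sym)
  then have "length (Zs J xs ys) \<le> LCS_len xs ys" by (rule LCS_ge[OF Zs_subseq[OF assms(1)]])
  then show ?thesis using Zs_len[of J xs ys] by linarith
qed

fun H :: "(nat \<Rightarrow> real) \<Rightarrow> nat \<Rightarrow> bool \<Rightarrow> nat list \<Rightarrow> real" where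
  "H \<beta> 0 a xs = 1"
| "H \<beta> (Suc J) a [] = 0"
| "H \<beta> (Suc J) a (x#xs) = (if x = 1 then (1 - \<beta> 0 * (if a then 1 else 0)) * H (\<lambda>j. \<beta> (Suc j)) J False xs
      else H \<beta> (Suc J) (a \<or> x = 2) xs)"

lemma H_gap: "H \<beta> (Suc J) a xs = (if 1 \<in> set xs then (1 - \<beta> 0 * (if a \<or> 2 \<in> set (gap xs) then 1 else 0)) *
     H (\<lambda>j. \<beta> (Suc j)) J False (rest xs) else 0)"
  by (induction xs arbitrary: a) auto

definition \<beta>of :: "real \<Rightarrow> nat list \<Rightarrow> nat \<Rightarrow> real" where
  "\<beta>of l ys j = (1 - exp (-l)) * (if 2 \<in> set (gap ((rest^^j) ys)) then 1 else 0)"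

lemma \<beta>of_Suc: "\<beta>of l ys (Suc j) = \<beta>of l (rest ys) j"
  unfolding \<beta>of_def by (simp add: funpow_Suc_right del: funpow.simps)

lemma Hx: fixes l :: real shows "(if J \<le> cnt1 xs then exp (-l * Gs J xs ys) else 0) = H (\<beta>of l ys) J False xs"
proof (induction J arbitrary: xs ys)
  case 0 then show ?case by simp
next
  case (Suc J)
  show ?case
  proof (cases "1 \<in> set xs")
    case False
    then have "cnt1 xs = 0" using cnt1_pos by auto
    then show ?thesis using False by (simp add: H_gap)
  next
    case True
    have sh: "(\<lambda>j. \<beta>of l ys (Suc j)) = \<beta>of l (rest ys)" by (simp add: \<beta>of_Suc)
    have e: "exp (-l * real (Gs (Suc J) xs ys)) =
        (1 - \<beta>of l ys 0 * (if 2 \<in> set (gap xs) then 1 else 0)) * exp (-l * real (Gs J (rest xs) (rest ys)))"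
      by (auto simp: \<beta>of_def algebra_simps exp_add[symmetric])
    have IH: "H (\<beta>of l (rest ys)) J False (rest xs) = (if J \<le> cnt1 (rest xs) then exp (-l * Gs J (rest xs) (rest ys)) else 0)"
      using Suc.IH[of "rest xs" "rest ys"] by simp
    have r: "H (\<beta>of l ys) (Suc J) False xs = (1 - \<beta>of l ys 0 * (if 2 \<in> set (gap xs) then 1 else 0)) *
       H (\<beta>of l (rest ys)) J False (rest xs)"
      using True by (simp add: H_gap sh)
    show ?thesis
      unfolding r IH using True cnt1_rest[OF True] e by simp
  qed
qed

lemma Hy: "(if J \<le> cnt1 ys then (\<Prod>j<J. 1 - d * (if 2 \<in> set (gap ((rest^^j) ys)) then 1 else 0)) else 0)
   = H (\<lambda>_. d) J False ys"
proof (induction J arbitrary: ys)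
  case 0 then show ?case by simp
next
  case (Suc J)
  show ?case
  proof (cases "1 \<in> set ys")
    case False
    then have "cnt1 ys = 0" using cnt1_pos by auto
    then show ?thesis using False by (simp add: H_gap)
  next
    case True
    have ps: "(\<Prod>j<Suc J. 1 - d * (if 2 \<in> set (gap ((rest^^j) ys)) then 1 else 0)) =
      (1 - d * (if 2 \<in> set (gap ys) then 1 else 0)) * (\<Prod>j<J. 1 - d * (if 2 \<in> set (gap ((rest^^j) (rest ys))) then 1 else 0))"
      by (subst prod.lessThan_Suc_shift) (simp add: funpow_Suc_right del: funpow.simps)
    have IH: "H (\<lambda>_. d) J False (rest ys) = (if J \<le> cnt1 (rest ys) then (\<Prod>j<J. 1 - d * (if 2 \<in> set (gap ((rest^^j) (rest ys))) then 1 else 0)) else 0)"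
      using Suc.IH[of "rest ys"] by simp
    have r: "H (\<lambda>_. d) (Suc J) False ys = (1 - d * (if 2 \<in> set (gap ys) then 1 else 0)) * H (\<lambda>_. d) J False (rest ys)"
      using True by (simp add: H_gap)
    show ?thesis unfolding r IH ps using True cnt1_rest[OF True] by simp
  qed
qed

locale lcs_setup =
  fixes m :: nat and p :: "nat \<Rightarrow> real"
  assumes m2: "m \<ge> 2" and pnn: "\<forall>k\<in>{1..m}. p k \<ge> 0" and psum: "(\<Sum>k=1..m. p k) = 1"
begin

definition E :: "nat \<Rightarrow> (nat list \<Rightarrow> real) \<Rightarrow> real" where
  "E n f = (\<Sum>xs\<in>words m n. word_prob p xs * f xs)"

lemma words_0: "words m 0 = {[]}" by (auto simp: words_def)

lemma words_Suc: "words m (Suc n) = (\<lambda>(x,xs). x#xs) ` ({1..m} \<times> words m n)"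
proof (intro set_eqI iffI)
  fix ys assume "ys \<in> words m (Suc n)"
  then obtain x xs where "ys = x # xs" "length xs = n" "x \<in> {1..m}" "set xs \<subseteq> {1..m}"
    unfolding words_def by (cases ys) auto
  then show "ys \<in> (\<lambda>(x,xs). x#xs) ` ({1..m} \<times> words m n)"
    unfolding words_def by force
qed (auto simp: words_def)

lemma finite_words: "finite (words m n)"
  by (induction n) (auto simp: words_0 words_Suc)

lemma word_prob_Cons: "word_prob p (x#xs) = p x * word_prob p xs"
  unfolding word_prob_def by (subst length_Cons, subst prod.lessThan_Suc_shift) simp

lemma word_prob_nn: "xs \<in> words m n \<Longrightarrow> word_prob p xs \<ge> 0"
  unfolding word_prob_def words_def using pnn
  by (auto intro!: prod_nonneg) (meson nth_mem subsetD)

lemma E_0: "E 0 f = f []"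
  by (simp add: E_def words_0 word_prob_def)

lemma E_Suc: "E (Suc n) f = (\<Sum>x=1..m. p x * E n (\<lambda>xs. f (x#xs)))"
proof -
  have inj: "inj_on (\<lambda>(x,xs). x#xs) ({1..m} \<times> words m n)" by (auto simp: inj_on_def)
  have "E (Suc n) f = (\<Sum>(x,xs)\<in>{1..m} \<times> words m n. word_prob p (x#xs) * f (x#xs))"
    unfolding E_def words_Suc by (subst sum.reindex[OF inj]) (simp add: case_prod_beta)
  also have "\<dots> = (\<Sum>x=1..m. \<Sum>xs\<in>words m n. p x * (word_prob p xs * f (x#xs)))"
    by (subst sum.cartesian_product[symmetric]) (simp add: word_prob_Cons mult.assoc)
  also have "\<dots> = (\<Sum>x=1..m. p x * E n (\<lambda>xs. f (x#xs)))"
    unfolding E_def by (simp add: sum_distrib_left)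
  finally show ?thesis .
qed

lemma E_mono: "(\<And>xs. xs \<in> words m n \<Longrightarrow> f xs \<le> g xs) \<Longrightarrow> E n f \<le> E n g"
  unfolding E_def by (intro sum_mono mult_left_mono) (auto intro: word_prob_nn)

lemma psum': "sum p {Suc 0..m} = 1" using psum by simp

lemma E_const: "E n (\<lambda>_. c) = c"
proof (induction n)
  case 0 then show ?case by (simp add: E_0)
next
  case (Suc n) then show ?case by (simp add: E_Suc sum_distrib_right[symmetric] psum')
qed

lemma E_diff: "E n (\<lambda>x. f x - g x) = E n f - E n g"
  unfolding E_def by (simp add: right_diff_distrib sum_subtractf)

lemma E_add: "E n (\<lambda>x. f x + g x) = E n f + E n g"
  unfolding E_def by (simp add: distrib_left sum.distrib)

lemma E_cmult: "E n (\<lambda>x. c * f x) = c * E n f"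
  unfolding E_def by (simp add: sum_distrib_left mult.left_commute)

lemma sum_split1: "(\<Sum>x=1..m. f x) = f 1 + (\<Sum>x=2..m. f x)"
  using m2 by (subst sum.atLeast_Suc_atMost) (auto simp: numeral_2_eq_2)

lemma sum_split2: "(\<Sum>x=2..m. f x) = f 2 + (\<Sum>x=3..m. f x)"
  using m2 by (subst sum.atLeast_Suc_atMost) (auto simp: numeral_3_eq_3 numeral_2_eq_2)

lemma p1_nn: "p 1 \<ge> 0" using pnn m2 by auto
lemma p2_nn: "p 2 \<ge> 0" using pnn m2 by auto
lemma sum2: "(\<Sum>x=2..m. p x) = 1 - p 1" using psum sum_split1[of p] by simp
lemma sum3: "(\<Sum>x=3..m. p x) = 1 - p 1 - p 2" using sum2 sum_split2[of p] by simp
lemma sum3_nn: "(\<Sum>x=3..m. p x) \<ge> 0" using pnn by (intro sum_nonneg) auto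
lemma p12: "p 1 + p 2 \<le> 1" using sum3 sum3_nn by simp

lemma E_cnt1: fixes l :: real shows "E n (\<lambda>xs. exp (- l * cnt1 xs)) = (1 - p 1 + p 1 * exp (- l)) ^ n"
proof (induction n)
  case 0 then show ?case by (simp add: E_0)
next
  case (Suc n)
  have "E (Suc n) (\<lambda>xs. exp (- l * cnt1 xs)) =
     p 1 * (exp (-l) * E n (\<lambda>xs. exp (- l * cnt1 xs))) + (\<Sum>x=2..m. p x * E n (\<lambda>xs. exp (- l * cnt1 xs)))"
    unfolding E_Suc sum_split1
    by (auto simp: E_cmult[symmetric] exp_add[symmetric] algebra_simps intro!: sum.cong)
  also have "\<dots> = (1 - p 1 + p 1 * exp (- l)) ^ Suc n"
    unfolding Suc sum_distrib_right[symmetric] sum2 by (simp add: algebra_simps)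
  finally show ?case .
qed

end

context lcs_setup
begin

definition q :: real where "q = p 2 / (p 2 + p 1)"

definition Bd :: "(nat \<Rightarrow> real) \<Rightarrow> nat \<Rightarrow> bool \<Rightarrow> real" where
  "Bd \<beta> J a = (case J of 0 \<Rightarrow> 1 | Suc J' \<Rightarrow> (1 - \<beta> 0 * (if a then 1 else q)) * (\<Prod>j<J'. 1 - \<beta> (Suc j) * q))"

context
  assumes p1pos: "p 1 > 0"
begin

lemma q_nn: "q \<ge> 0" unfolding q_def using p1_nn p2_nn by simp
lemma q_le1: "q \<le> 1" unfolding q_def using p1pos p2_nn by simp
lemma q_key: "p 2 = q * p 1 + q * p 2"
proof -
  have pos: "p 2 + p 1 > 0" using p1pos p2_nn by simp
  have "q * p 1 + q * p 2 = q * (p 2 + p 1)" by (simp add: algebra_simps)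
  also have "\<dots> = p 2" unfolding q_def using pos by simp
  finally show ?thesis by simp
qed

lemma Bd_nn: "(\<forall>j. 0 \<le> \<beta> j \<and> \<beta> j \<le> 1) \<Longrightarrow> Bd \<beta> J a \<ge> 0"
  unfolding Bd_def using q_nn q_le1
  by (cases J) (auto intro!: mult_nonneg_nonneg prod_nonneg simp: mult_le_one)

lemma Bd_shift: "Bd (\<lambda>j. \<beta> (Suc j)) J False = (\<Prod>j<J. 1 - \<beta> (Suc j) * q)"
  unfolding Bd_def by (cases J) (simp_all add: prod.lessThan_Suc_shift del: prod.lessThan_Suc)

lemma H_bound: "\<forall>\<beta> J a. (\<forall>j. 0 \<le> \<beta> j \<and> \<beta> j \<le> 1) \<longrightarrow> E n (H \<beta> J a) \<le> Bd \<beta> J a"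
proof (induction n)
  case 0
  show ?case
  proof (intro allI impI)
    fix \<beta> :: "nat \<Rightarrow> real" and J :: nat and a :: bool assume b: "\<forall>j. 0 \<le> \<beta> j \<and> \<beta> j \<le> 1"
    show "E 0 (H \<beta> J a) \<le> Bd \<beta> J a"
      using Bd_nn[OF b, of J a] by (cases J) (auto simp: E_0 Bd_def)
  qed
next
  case (Suc n)
  show ?case
  proof (intro allI impI)
    fix \<beta> :: "nat \<Rightarrow> real" and J :: nat and a :: bool assume b: "\<forall>j. 0 \<le> \<beta> j \<and> \<beta> j \<le> 1"
    show "E (Suc n) (H \<beta> J a) \<le> Bd \<beta> J a"
    proof (cases J)
      case 0
      have "H \<beta> 0 a = (\<lambda>_. 1)" by (rule ext) simp
      then show ?thesis using 0 by (simp add: E_const Bd_def)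
    next
      case (Suc J')
      define R where "R = (\<Prod>j<J'. 1 - \<beta> (Suc j) * q)"
      define h where "h = (if a then 1 else q)"
      have b0: "0 \<le> \<beta> 0" "\<beta> 0 \<le> 1" using b by auto
      have b': "\<forall>j. 0 \<le> \<beta> (Suc j) \<and> \<beta> (Suc j) \<le> 1" using b by auto
      have BdJ: "Bd \<beta> J a' = (1 - \<beta> 0 * (if a' then 1 else q)) * R" for a'
        unfolding Bd_def Suc R_def by simp
      have T1: "E n (\<lambda>xs. H \<beta> J a (1 # xs)) \<le> (1 - \<beta> 0 * (if a then 1 else 0)) * R"
      proof -
        have "E n (\<lambda>xs. H \<beta> J a (1 # xs)) = (1 - \<beta> 0 * (if a then 1 else 0)) * E n (H (\<lambda>j. \<beta> (Suc j)) J' False)"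
          unfolding Suc by (simp add: E_cmult)
        also have "\<dots> \<le> (1 - \<beta> 0 * (if a then 1 else 0)) * R"
          using Suc.IH b' b0 unfolding R_def Bd_shift[symmetric] by (intro mult_left_mono) auto
        finally show ?thesis .
      qed
      have T2: "E n (\<lambda>xs. H \<beta> J a (2 # xs)) \<le> (1 - \<beta> 0) * R"
      proof -
        have "E n (H \<beta> (Suc J') True) \<le> Bd \<beta> (Suc J') True" using Suc.IH b by blast
        then show ?thesis using BdJ[of True] unfolding Suc by simp
      qed
      have T3: "E n (\<lambda>xs. H \<beta> J a (x # xs)) \<le> (1 - \<beta> 0 * h) * R" if "x \<in> {3..m}" for x
      proof -
        have "x \<noteq> 1" "x \<noteq> 2" using that by auto
        then have "E n (\<lambda>xs. H \<beta> J a (x # xs)) = E n (H \<beta> J a)" unfolding Suc by simp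
        also have "\<dots> \<le> Bd \<beta> J a" using Suc.IH b by blast
        also have "\<dots> = (1 - \<beta> 0 * h) * R" using BdJ[of a] unfolding h_def by simp
        finally show ?thesis .
      qed
      have "E (Suc n) (H \<beta> J a) = p 1 * E n (\<lambda>xs. H \<beta> J a (1 # xs)) + p 2 * E n (\<lambda>xs. H \<beta> J a (2 # xs))
          + (\<Sum>x=3..m. p x * E n (\<lambda>xs. H \<beta> J a (x # xs)))"
        unfolding E_Suc sum_split1 sum_split2 by simp
      also have "\<dots> \<le> p 1 * ((1 - \<beta> 0 * (if a then 1 else 0)) * R) + p 2 * ((1 - \<beta> 0) * R)
          + (\<Sum>x=3..m. p x * ((1 - \<beta> 0 * h) * R))"
        using T1 T2 T3 p1_nn p2_nn pnn
        by (intro add_mono mult_left_mono sum_mono) auto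
      also have "\<dots> = (1 - \<beta> 0 * h) * R"
      proof -
        have "(\<Sum>x=3..m. p x * ((1 - \<beta> 0 * h) * R)) = (1 - p 1 - p 2) * ((1 - \<beta> 0 * h) * R)"
          by (simp add: sum_distrib_right[symmetric] sum3)
        moreover have "p 1 * ((1 - \<beta> 0 * (if a then 1 else 0)) * R) + p 2 * ((1 - \<beta> 0) * R)
          + (1 - p 1 - p 2) * ((1 - \<beta> 0 * h) * R) = (1 - \<beta> 0 * h) * R"
        proof (cases a)
          case True then show ?thesis unfolding h_def by (simp add: algebra_simps)
        next
          case False
          have "p 1 * ((1 - \<beta> 0 * (if a then 1 else 0)) * R) + p 2 * ((1 - \<beta> 0) * R)
            + (1 - p 1 - p 2) * ((1 - \<beta> 0 * h) * R) = (1 - \<beta> 0 * h) * R + \<beta> 0 * R * (q * p 1 + q * p 2 - p 2)"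
            using False unfolding h_def by (simp add: algebra_simps)
          then show ?thesis using q_key by simp
        qed
        ultimately show ?thesis by simp
      qed
      also have "\<dots> = Bd \<beta> J a" using BdJ[of a] unfolding h_def by simp
      finally show ?thesis .
    qed
  qed
qed

lemma H_bound_False: "(\<forall>j. 0 \<le> \<beta> j \<and> \<beta> j \<le> 1) \<Longrightarrow> E n (H \<beta> J False) \<le> (\<Prod>j<J. 1 - \<beta> j * q)"
proof -
  assume b: "\<forall>j. 0 \<le> \<beta> j \<and> \<beta> j \<le> 1"
  have "Bd \<beta> J False = (\<Prod>j<J. 1 - \<beta> j * q)"
    unfolding Bd_def by (cases J) (simp_all add: prod.lessThan_Suc_shift del: prod.lessThan_Suc)
  then show ?thesis using H_bound[of n] b by metis
qed

end
end

lemma hoeff_bern: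
  fixes r l :: real
  assumes "0 \<le> r" "r \<le> 1" "l \<ge> 0"
  shows "1 - r + r * exp (-l) \<le> exp (- l * r + l^2 / 8)"
proof -
  have A: "- l * (1 - r) + ln (1 + (1 - r) * (exp l - 1)) \<le> l^2 / 8"
    using Hoeffdings_lemma_aux[of l "1 - r"] assms by simp
  have pos: "1 + (1 - r) * (exp l - 1) > 0"
    using assms by (intro add_pos_nonneg mult_nonneg_nonneg) auto
  have L: "ln (1 + (1 - r) * (exp l - 1)) \<le> l * (1 - r) + l^2 / 8" using A by (simp add: algebra_simps)
  have "1 + (1 - r) * (exp l - 1) = exp (ln (1 + (1 - r) * (exp l - 1)))" using pos by simp
  also have "\<dots> \<le> exp (l * (1 - r) + l^2 / 8)" using L by simp
  finally have "1 + (1 - r) * (exp l - 1) \<le> exp (l * (1 - r) + l^2 / 8)" .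
  then have "exp (-l) * (1 + (1 - r) * (exp l - 1)) \<le> exp (-l) * exp (l * (1 - r) + l^2 / 8)"
    by (intro mult_left_mono) auto
  moreover have "exp (-l) * (1 + (1 - r) * (exp l - 1)) = 1 - r + r * exp (-l)"
    by (simp add: algebra_simps exp_minus field_simps)
  moreover have "exp (-l) * exp (l * (1 - r) + l^2 / 8) = exp (- l * r + l^2 / 8)"
    by (simp add: exp_add[symmetric] algebra_simps)
  ultimately show ?thesis by simp
qed

context lcs_setup
begin

lemma pair_conv: "pair_prob m p n Ev = E n (\<lambda>ys. E n (\<lambda>xs. if Ev xs ys then 1 else 0))"
proof -
  have "pair_prob m p n Ev = (\<Sum>(xs, ys)\<in>words m n \<times> words m n. if Ev xs ys then word_prob p xs * word_prob p ys else 0)"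
    unfolding pair_prob_def
    by (rule sum.mono_neutral_cong_left) (auto simp: finite_words split: if_splits)
  also have "\<dots> = (\<Sum>xs\<in>words m n. \<Sum>ys\<in>words m n. if Ev xs ys then word_prob p xs * word_prob p ys else 0)"
    by (subst sum.cartesian_product) simp
  also have "\<dots> = (\<Sum>ys\<in>words m n. \<Sum>xs\<in>words m n. if Ev xs ys then word_prob p xs * word_prob p ys else 0)"
    by (rule sum.swap)
  also have "\<dots> = E n (\<lambda>ys. E n (\<lambda>xs. if Ev xs ys then 1 else 0))"
    unfolding E_def by (auto simp: sum_distrib_left intro!: sum.cong)
  finally show ?thesis .
qed

lemma tail1:
  fixes t a :: real
  assumes "t \<ge> 0" "a \<le> n * (p 1 - t)"
  shows "E n (\<lambda>xs. if real (cnt1 xs) < a then 1 else 0) \<le> exp (- 2 * n * t^2)"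
proof -
  define l where "l = 4 * t"
  have l: "l \<ge> 0" using assms unfolding l_def by simp
  have "E n (\<lambda>xs. if real (cnt1 xs) < a then 1 else 0) \<le> E n (\<lambda>xs. exp (l * a) * exp (- l * cnt1 xs))"
  proof (rule E_mono)
    fix xs
    show "(if real (cnt1 xs) < a then 1 else 0) \<le> exp (l * a) * exp (- l * cnt1 xs)"
    proof (cases "real (cnt1 xs) < a")
      case True
      then have "0 \<le> l * (a - cnt1 xs)" using l by simp
      then have "1 \<le> exp (l * (a - cnt1 xs))" by simp
      then show ?thesis using True by (simp add: exp_add[symmetric] algebra_simps)
    qed simp
  qed
  also have "\<dots> = exp (l * a) * (1 - p 1 + p 1 * exp (- l)) ^ n"
    by (simp only: E_cmult E_cnt1)
  also have "\<dots> \<le> exp (l * a) * exp (- l * p 1 + l^2 / 8) ^ n"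
    using hoeff_bern[of "p 1" l] p1_nn p12 p2_nn l
    by (intro mult_left_mono power_mono) (auto intro: add_nonneg_nonneg)
  also have "\<dots> = exp (l * a + n * (- l * p 1 + l^2 / 8))"
    by (simp add: exp_add exp_of_nat_mult[symmetric])
  also have "\<dots> \<le> exp (- 2 * real n * t^2)"
  proof -
    have "l * a \<le> l * (n * (p 1 - t))" using assms l by (intro mult_left_mono) auto
    then have "l * a + n * (- l * p 1 + l^2 / 8) \<le> - 2 * real n * t^2"
      unfolding l_def by (simp add: algebra_simps power2_eq_square)
    then show ?thesis by simp
  qed
  finally show ?thesis .
qed

context
  assumes p1pos: "p 1 > 0"
begin

lemma tail3:
  fixes l g :: real
  assumes "l \<ge> 0"
  shows "E n (\<lambda>ys. E n (\<lambda>xs. if J \<le> cnt1 xs \<and> J \<le> cnt1 ys \<and> real (Gs J xs ys) < g then 1 else 0))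
     \<le> exp (l * g) * (1 - (1 - exp (-l)) * q^2) ^ J"
proof -
  define c where "c = 1 - exp (-l)"
  have c: "0 \<le> c" "c \<le> 1" unfolding c_def using assms by auto
  have bof: "\<forall>j. 0 \<le> \<beta>of l ys j \<and> \<beta>of l ys j \<le> 1" for ys
    unfolding \<beta>of_def using assms by auto
  have cq: "\<forall>j. 0 \<le> (\<lambda>_. c * q) j \<and> (\<lambda>_. c * q) j \<le> 1"
    using c q_nn[OF p1pos] q_le1[OF p1pos] by (auto simp: mult_le_one)
  have inner: "E n (\<lambda>xs. if J \<le> cnt1 xs \<and> J \<le> cnt1 ys \<and> real (Gs J xs ys) < g then 1 else 0)
      \<le> exp (l * g) * H (\<lambda>_. c * q) J False ys" for ys
  proof (cases "J \<le> cnt1 ys")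
    case False
    then have "H (\<lambda>_. c * q) J False ys = 0" using Hy[of J ys "c * q"] by simp
    then show ?thesis using False by (simp add: E_const)
  next
    case True
    have "E n (\<lambda>xs. if J \<le> cnt1 xs \<and> J \<le> cnt1 ys \<and> real (Gs J xs ys) < g then 1 else 0)
        \<le> E n (\<lambda>xs. exp (l * g) * H (\<beta>of l ys) J False xs)"
    proof (rule E_mono)
      fix xs
      show "(if J \<le> cnt1 xs \<and> J \<le> cnt1 ys \<and> real (Gs J xs ys) < g then 1 else 0) \<le> exp (l * g) * H (\<beta>of l ys) J False xs"
      proof (cases "J \<le> cnt1 xs")
        case True2: True
        have "(if J \<le> cnt1 xs \<and> J \<le> cnt1 ys \<and> real (Gs J xs ys) < g then 1 else 0) \<le> exp (l * (g - Gs J xs ys))"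
        proof (cases "real (Gs J xs ys) < g")
          case True
          then have "0 \<le> l * (g - Gs J xs ys)" using assms by simp
          then show ?thesis by simp
        qed simp
        also have "\<dots> = exp (l * g) * exp (- l * Gs J xs ys)"
          by (simp add: exp_add[symmetric] algebra_simps)
        also have "\<dots> = exp (l * g) * H (\<beta>of l ys) J False xs"
          using Hx[of J xs l ys] True2 by simp
        finally show ?thesis .
      next
        case False
        then show ?thesis using Hx[of J xs l ys] by simp
      qed
    qed
    also have "\<dots> = exp (l * g) * E n (H (\<beta>of l ys) J False)" by (simp add: E_cmult)
    also have "\<dots> \<le> exp (l * g) * (\<Prod>j<J. 1 - \<beta>of l ys j * q)"
      using H_bound_False[OF p1pos bof] by (intro mult_left_mono) auto
    also have "(\<Prod>j<J. 1 - \<beta>of l ys j * q) = H (\<lambda>_. c * q) J False ys"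
      using Hy[of J ys "c * q"] True unfolding \<beta>of_def c_def
      by (simp add: algebra_simps)
    finally show ?thesis .
  qed
  have "E n (\<lambda>ys. E n (\<lambda>xs. if J \<le> cnt1 xs \<and> J \<le> cnt1 ys \<and> real (Gs J xs ys) < g then 1 else 0))
      \<le> E n (\<lambda>ys. exp (l * g) * H (\<lambda>_. c * q) J False ys)"
    by (rule E_mono) (rule inner)
  also have "\<dots> = exp (l * g) * E n (H (\<lambda>_. c * q) J False)" by (simp add: E_cmult)
  also have "\<dots> \<le> exp (l * g) * (\<Prod>j<J. 1 - c * q * q)"
    using H_bound_False[OF p1pos cq] by (intro mult_left_mono) auto
  also have "\<dots> = exp (l * g) * (1 - (1 - exp (-l)) * q^2) ^ J"
    by (simp add: c_def power2_eq_square mult.assoc)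
  finally show ?thesis .
qed

end
end

lemma derivA: "y < (1::real) \<Longrightarrow> ((\<lambda>y::real. ln (1 - y) + y / 2 + 1 / (2 * (1 - y))) has_real_derivative (1 / 2 - 1 / (1 - y) + 2 / ((2 - 2 * y) * (2 - 2 * y)))) (at y)"
  by (rule derivative_eq_intros refl | simp)+

lemma derivB: fixes y :: real assumes "y < 1" shows "1 / 2 - 1 / (1 - y) + 2 / ((2 - 2 * y) * (2 - 2 * y)) \<ge> 0"
proof -
  define z where "z = 1 - y"
  have z: "z > 0" using assms unfolding z_def by simp
  have e: "2 - 2 * y = 2 * z" unfolding z_def by simp
  have "1 / 2 - 1 / (1 - y) + 2 / ((2 - 2 * y) * (2 - 2 * y)) = (z - 1)^2 / (2 * z^2)"
    unfolding e z_def[symmetric] using z by (simp add: field_simps power2_eq_square)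
  then show ?thesis by simp
qed

lemma ln_lb:
  fixes x :: real
  assumes "0 \<le> x" "x < 1"
  shows "- x - x^2 / (2 * (1 - x)) \<le> ln (1 - x)"
proof -
  define g where "g = (\<lambda>y::real. ln (1 - y) + y / 2 + 1 / (2 * (1 - y)))"
  have "g 0 \<le> g x"
  proof (rule DERIV_nonneg_imp_nondecreasing[OF assms(1)])
    fix y :: real assume y: "0 \<le> y" "y \<le> x"
    then have y1: "y < 1" using assms by simp
    have d: "DERIV g y :> (1 / 2 - 1 / (1 - y) + 2 / ((2 - 2 * y) * (2 - 2 * y)))"
      unfolding g_def by (rule derivA[OF y1])
    have "1 / 2 - 1 / (1 - y) + 2 / ((2 - 2 * y) * (2 - 2 * y)) \<ge> 0" by (rule derivB[OF y1])
    then show "\<exists>d. DERIV g y :> d \<and> d \<ge> 0" using d by metis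
  qed
  moreover have "x + x^2 / (2 * (1 - x)) = x / 2 + 1 / (2 * (1 - x)) - 1 / 2"
    using assms by (simp add: field_simps power2_eq_square)
  ultimately show ?thesis unfolding g_def by simp
qed

lemma N2:
  fixes x P :: real
  assumes "0 \<le> x" "x < 1" "x \<le> P" "P \<le> 1"
  shows "-(x^2) / 2 \<le> (x + ln (1 - x)) * (P - x)"
proof -
  have l1: "ln (1 - x) \<le> - x" using ln_one_minus_pos_upper_bound[of x] assms by simp
  have l2: "- x - x^2 / (2 * (1 - x)) \<le> ln (1 - x)" using ln_lb assms by simp
  have "(x + ln (1 - x)) * (1 - x) \<le> (x + ln (1 - x)) * (P - x)"
    using l1 assms by (intro mult_left_mono_neg) auto
  moreover have "-(x^2) / 2 \<le> (x + ln (1 - x)) * (1 - x)"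
  proof -
    have "(-(x^2) / (2 * (1 - x))) * (1 - x) \<le> (x + ln (1 - x)) * (1 - x)"
      using l2 assms by (intro mult_right_mono) auto
    moreover have "(-(x^2) / (2 * (1 - x))) * (1 - x) = -(x^2) / 2" using assms by (simp add: field_simps)
    ultimately show ?thesis by simp
  qed
  ultimately show ?thesis by linarith
qed

lemma N1:
  fixes p P :: real
  assumes "0 \<le> p" "P > 1/2" "P + p \<le> 1"
  shows "(P - p^3) * (p / (p + P))^2 \<ge> p^2 * (1 - p)^3 + p^3 / 2"
proof -
  define s where "s = p + P"
  have s: "s > 0" "s \<le> 1" "s > 1/2 + p" using assms unfolding s_def by auto
  have p12: "p < 1/2" using assms by simp
  have k: "P * (1 - (1 - p)^3 - p / 2) \<ge> p^3 + p * (1 - p)^3 + p^2 / 2"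
  proof -
    have k0: "1 - (1 - p)^3 - p / 2 \<ge> 0"
    proof -
      have "1 - (1 - p)^3 - p / 2 = p * (5/2 - 3 * p + p^2)" by (simp add: algebra_simps power3_eq_cube power2_eq_square)
      moreover have "5/2 - 3 * p + p^2 \<ge> 0"
      proof -
        have "5/2 - 3 * p + p^2 = (p - 3/2)^2 + 1/4" by (simp add: algebra_simps power2_eq_square)
        moreover have "(p - 3/2)^2 \<ge> 0" by simp
        ultimately show ?thesis by linarith
      qed
      ultimately show ?thesis using assms(1) by simp
    qed
    have "P * (1 - (1 - p)^3 - p / 2) \<ge> 1/2 * (1 - (1 - p)^3 - p / 2)"
      using k0 assms(2) by (intro mult_right_mono) auto
    moreover have "1/2 * (1 - (1 - p)^3 - p / 2) - (p^3 + p * (1 - p)^3 + p^2 / 2)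
       = p * ((1/2 - p) * (1/2 + 3 * p - p^2))"
      by (simp add: algebra_simps power3_eq_cube power2_eq_square)
    moreover have "p * ((1/2 - p) * (1/2 + 3 * p - p^2)) \<ge> 0"
    proof -
      have "p * p \<le> p" using p12 assms(1) by (intro mult_left_le) auto
      then have "1/2 + 3 * p - p^2 \<ge> 0" using assms(1) by (simp add: power2_eq_square)
      then show ?thesis using p12 assms(1) by (intro mult_nonneg_nonneg) auto
    qed
    ultimately show ?thesis by linarith
  qed
  have c0: "(1 - p)^3 + p / 2 \<ge> 0" using p12 assms(1) by (intro add_nonneg_nonneg) auto
  have "((1 - p)^3 + p / 2) * s^2 \<le> ((1 - p)^3 + p / 2) * s"
    using s c0 by (intro mult_left_mono) (auto simp: power2_eq_square mult_le_cancel_left1)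
  also have "\<dots> \<le> P - p^3"
  proof -
    have e1: "((1 - p)^3 + p / 2) * s = P * (1 - p)^3 + p * (1 - p)^3 + P * p / 2 + p^2 / 2"
      unfolding s_def by (simp add: algebra_simps power2_eq_square)
    have e2: "P * (1 - (1 - p)^3 - p / 2) = P - P * (1 - p)^3 - P * p / 2"
      by (simp add: algebra_simps)
    show ?thesis using k e1 e2 by linarith
  qed
  finally have main: "((1 - p)^3 + p / 2) * s^2 \<le> P - p^3" .
  have "p^2 * (1 - p)^3 + p^3 / 2 = p^2 * ((1 - p)^3 + p / 2)" by (simp add: algebra_simps power3_eq_cube power2_eq_square)
  also have "\<dots> = p^2 * (((1 - p)^3 + p / 2) * s^2) / s^2" using s by simp
  also have "\<dots> \<le> p^2 * (P - p^3) / s^2"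
    using main by (intro divide_right_mono mult_left_mono) auto
  also have "\<dots> = (P - p^3) * (p / (p + P))^2" unfolding s_def by (simp add: power_divide)
  finally show ?thesis .
qed

theorem lemma3p1:
  fixes m n :: nat and p :: "nat \<Rightarrow> real"
  assumes "m \<ge> 2"
    and "\<forall>k\<in>{1..m}. p k \<ge> 0"
    and "(\<Sum>k=1..m. p k) = 1"
    and "\<forall>j\<in>{2..m}. p j \<le> p 2"
    and "p 1 > 1/2"
  shows "pair_prob m p n (\<lambda>xs ys. real (LCS_len xs ys)
            \<ge> n * p 1 + ((1 - p 2)^3 - p 2) * n * (p 2)^2)
         \<ge> 1 - 4 * exp (- 2 * n * (p 2)^6)
             - exp (n * ((p 2)^3 + ln (1 - (p 2)^3)) * (p 1 - (p 2)^3))"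
proof -
  interpret L: lcs_setup m p using assms(1-3) by unfold_locales auto
  have p2nn: "p 2 \<ge> 0" by (rule L.p2_nn)
  have p12: "p 1 + p 2 \<le> 1" by (rule L.p12)
  have p1pos: "p 1 > 0" using assms(5) by simp
  have p2half: "p 2 < 1/2" using p12 assms(5) by simp
  define x where "x = (p 2)^3"
  have x0: "0 \<le> x" unfolding x_def using p2nn by simp
  have x8: "x \<le> 1/8"
  proof -
    have "(p 2)^3 \<le> (1/2)^3" using p2nn p2half by (intro power_mono) auto
    moreover have "(1/2::real)^3 = 1/8" by (simp add: power3_eq_cube)
    ultimately show ?thesis unfolding x_def by linarith
  qed
  have x1: "x < 1" "x \<le> p 1" "p 1 \<le> 1" using x8 assms(5) p12 p2nn by auto
  define a where "a = real n * (p 1 - x)"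
  define J0 where "J0 = nat \<lceil>a\<rceil>"
  have a0: "a \<ge> 0" unfolding a_def using x1 by simp
  have J0a: "a \<le> real J0" unfolding J0_def using a0 by linarith
  have J0n: "real J0 \<le> n"
  proof -
    have "a \<le> real n" unfolding a_def using x0 x1 by (simp add: mult_left_le)
    then have "\<lceil>a\<rceil> \<le> int n" by (simp add: ceiling_le_iff)
    then show ?thesis unfolding J0_def by linarith
  qed
  define g where "g = real n * (p 2)^2 * (1 - p 2)^3"
  define i1 where "i1 = (\<lambda>xs. if real (cnt1 xs) < a then 1 else 0 :: real)"
  define i3 where "i3 = (\<lambda>xs ys. if J0 \<le> cnt1 xs \<and> J0 \<le> cnt1 ys \<and> real (Gs J0 xs ys) < g then 1 else 0 :: real)"
  define Ev where "Ev = (\<lambda>xs ys :: nat list. real (LCS_len xs ys) \<ge> n * p 1 + ((1 - p 2)^3 - p 2) * n * (p 2)^2)"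
  have T: "n * p 1 + ((1 - p 2)^3 - p 2) * n * (p 2)^2 = a + g"
    unfolding a_def g_def x_def by (simp add: algebra_simps power2_eq_square power3_eq_cube)
  have pt: "1 - i1 ys - i1 xs - i3 xs ys \<le> (if Ev xs ys then 1 else 0)" for xs ys
  proof (cases "Ev xs ys")
    case True
    then show ?thesis unfolding i1_def i3_def by auto
  next
    case False
    have "i1 xs = 1 \<or> i1 ys = 1 \<or> i3 xs ys = 1"
    proof (rule ccontr)
      assume "\<not> ?thesis"
      then have c: "a \<le> real (cnt1 xs)" "a \<le> real (cnt1 ys)"
        and c3: "\<not> (J0 \<le> cnt1 xs \<and> J0 \<le> cnt1 ys \<and> real (Gs J0 xs ys) < g)"
        unfolding i1_def i3_def by (auto split: if_splits)
      have J0c: "J0 \<le> cnt1 xs" "J0 \<le> cnt1 ys" unfolding J0_def using c by (auto simp: nat_le_iff ceiling_le_iff)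
      from J0c c3 have gG: "g \<le> real (Gs J0 xs ys)" by auto
      have "a + g \<le> real (LCS_len xs ys)"
      proof -
        have "real (J0 + Gs J0 xs ys) \<le> real (LCS_len xs ys)"
          using LCS_Gs[OF J0c] by (simp only: of_nat_le_iff)
        then show ?thesis using J0a \<open>g \<le> real (Gs J0 xs ys)\<close> by simp
      qed
      then show False using False T unfolding Ev_def by simp
    qed
    then show ?thesis unfolding i1_def i3_def by (auto split: if_splits)
  qed
  define e1 where "e1 = L.E n i1"
  have "pair_prob m p n Ev = L.E n (\<lambda>ys. L.E n (\<lambda>xs. if Ev xs ys then 1 else 0))"
    by (rule L.pair_conv)
  also have "\<dots> \<ge> L.E n (\<lambda>ys. L.E n (\<lambda>xs. (1 - i1 ys) - i1 xs - i3 xs ys))"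
    using pt by (intro L.E_mono) auto
  also have "L.E n (\<lambda>ys. L.E n (\<lambda>xs. (1 - i1 ys) - i1 xs - i3 xs ys))
      = L.E n (\<lambda>ys. (1 - i1 ys) - e1 - L.E n (\<lambda>xs. i3 xs ys))"
    unfolding e1_def by (simp add: L.E_diff L.E_const)
  also have "\<dots> = 1 - e1 - e1 - L.E n (\<lambda>ys. L.E n (\<lambda>xs. i3 xs ys))"
    unfolding e1_def by (simp add: L.E_diff L.E_const)
  finally have main: "1 - e1 - e1 - L.E n (\<lambda>ys. L.E n (\<lambda>xs. i3 xs ys)) \<le> pair_prob m p n Ev" .
  have b1: "e1 \<le> exp (- 2 * n * x^2)"
    unfolding e1_def i1_def using L.tail1[of x a n] x0 unfolding a_def by simp
  define l where "l = 2 * x"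
  have l0: "l \<ge> 0" unfolding l_def using x0 by simp
  have b3: "L.E n (\<lambda>ys. L.E n (\<lambda>xs. i3 xs ys)) \<le> exp (l * g) * (1 - (1 - exp (-l)) * L.q^2) ^ J0"
    unfolding i3_def using L.tail3[OF p1pos l0, of n J0 g] by simp
  have q0: "0 \<le> L.q" "L.q \<le> 1" using L.q_nn[OF p1pos] L.q_le1[OF p1pos] by auto
  have q2: "0 \<le> L.q^2" "L.q^2 \<le> 1" using q0 by (auto simp: power_le_one)
  have base0: "0 \<le> 1 - (1 - exp (-l)) * L.q^2"
  proof -
    have "(1 - exp (-l)) * L.q^2 \<le> 1 * 1" using q2 l0 by (intro mult_mono) auto
    then show ?thesis by simp
  qed
  have hb: "1 - (1 - exp (-l)) * L.q^2 \<le> exp (- l * L.q^2 + l^2 / 8)"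
    using hoeff_bern[of "L.q^2" l] q2 l0 by (simp add: algebra_simps)
  have "(1 - (1 - exp (-l)) * L.q^2) ^ J0 \<le> exp (- l * L.q^2 + l^2 / 8) ^ J0"
    using hb base0 by (intro power_mono) auto
  also have "\<dots> = exp (real J0 * (- l * L.q^2 + l^2 / 8))"
    by (simp add: exp_of_nat_mult)
  finally have b3': "L.E n (\<lambda>ys. L.E n (\<lambda>xs. i3 xs ys)) \<le> exp (l * g + real J0 * (- l * L.q^2 + l^2 / 8))"
    using b3 by (smt (verit) exp_add exp_gt_zero mult_left_mono)
  have N1': "(p 1 - x) * L.q^2 \<ge> (p 2)^2 * (1 - p 2)^3 + x / 2"
    using N1[of "p 2" "p 1"] p2nn assms(5) p12 unfolding x_def L.q_def by (simp add: add.commute)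
  have ex: "l * g + real J0 * (- l * L.q^2 + l^2 / 8) \<le> - (real n * x^2 / 2)"
  proof -
    have A: "a * L.q^2 \<ge> g + real n * x / 2"
    proof -
      have "real n * ((p 2)^2 * (1 - p 2)^3 + x / 2) \<le> real n * ((p 1 - x) * L.q^2)"
        using N1' by (intro mult_left_mono) auto
      then show ?thesis unfolding a_def g_def by (simp add: algebra_simps)
    qed
    have B: "real J0 * L.q^2 \<ge> a * L.q^2" using J0a q2 by (intro mult_right_mono) auto
    have C: "l * (real J0 * L.q^2) \<ge> l * (g + real n * x / 2)" using A B l0
      by (intro mult_left_mono) auto
    have D: "real J0 * l^2 \<le> real n * l^2" using J0n by (intro mult_right_mono) auto
    have "l * g + real J0 * (- l * L.q^2 + l^2 / 8) = l * g - l * (real J0 * L.q^2) + real J0 * l^2 / 8"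
      by (simp add: algebra_simps)
    also have "\<dots> \<le> l * g - l * (g + real n * x / 2) + real n * l^2 / 8" using C D by linarith
    also have "\<dots> = - (real n * x^2 / 2)" unfolding l_def by (simp add: algebra_simps power2_eq_square)
    finally show ?thesis .
  qed
  have N2': "- (real n * x^2 / 2) \<le> real n * ((x + ln (1 - x)) * (p 1 - x))"
  proof -
    have "real n * (-(x^2) / 2) \<le> real n * ((x + ln (1 - x)) * (p 1 - x))"
      using N2[of x "p 1"] x0 x1 by (intro mult_left_mono) auto
    then show ?thesis by simp
  qed
  have b3'': "L.E n (\<lambda>ys. L.E n (\<lambda>xs. i3 xs ys)) \<le> exp (n * ((p 2)^3 + ln (1 - (p 2)^3)) * (p 1 - (p 2)^3))"
  proof -
    have "exp (l * g + real J0 * (- l * L.q^2 + l^2 / 8)) \<le> exp (real n * ((x + ln (1 - x)) * (p 1 - x)))"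
      using ex N2' by simp
    with b3' have "L.E n (\<lambda>ys. L.E n (\<lambda>xs. i3 xs ys)) \<le> exp (real n * ((x + ln (1 - x)) * (p 1 - x)))"
      by (rule order.trans)
    then show ?thesis unfolding x_def by (simp add: mult.assoc)
  qed
  have b1': "e1 \<le> exp (- 2 * n * (p 2)^6)"
  proof -
    have "x^2 = (p 2)^6" unfolding x_def by (simp add: power_mult[symmetric])
    then show ?thesis using b1 by simp
  qed
  have "exp (- 2 * n * (p 2)^6) \<ge> 0" by simp
  then show ?thesis using main b1' b3'' unfolding Ev_def by linarith
qed

end
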